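(* If $\varepsilon$ is sufficiently small (depending only on $g$), then $|\phi|\lesssim\sqrt{\varepsilon}$ on $\mathcal{D}$, with implicit constant depending only on $g$.
   Context: Target $d\rho^2+g(\rho)^2d\theta^2$ with $g$ smooth, odd, $g'(0)=1$, $\int_0^s g\to\infty$ as $s\to\infty$, satisfying the Grillakis condition $sg'(s)+g(s)>0$ for $s>0$; $f=gg'$; $\kappa>0$. In null coordinates $(u,\underline{u})$ with $\mathbf{g}=-\Omega^2du\,d\underline{u}+r^2d\theta^2$, normalized on the axis $\{u=\underline{u}\}$ by $r=0$, $\partial_{\underline{u}}r=1/2$, $\partial_ur=-1/2$, $\Omega=1$, the system reads: $\partial_u(\Omega^{-2}\partial_ur)=-\kappa\Omega^{-2}r(\partial_u\phi)^2$, $\partial_{\underline{u}}(\Omega^{-2}\partial_{\underline{u}}r)=-\kappa\Omega^{-2}r(\partial_{\underline{u}}\phi)^2$, $\partial_u\partial_{\underline{u}}r=\kappa\Omega^2g(\phi)^2/(4r)$, $\Omega^{-2}(\partial_u\Omega\,\partial_{\underline{u}}\Omega-\Omega\partial_u\partial_{\underline{u}}\Omega)=\tfrac{\kappa}{8}\big(4\partial_u\phi\,\partial_{\underline{u}}\phi+\Omega^2g(\phi)^2/r^2\big)$, $\partial_u(r\partial_{\underline{u}}\phi)+\partial_{\underline{u}}(r\partial_u\phi)=-\Omega^2f(\phi)/(2r)$. Let $\tau=(u+\underline{u})/2$, $\varrho=(\underline{u}-u)/2$ and $\mathcal{D}=\{-1\le\tau<0,\ \underline{u}\le0,\ u\le\underline{u}\}$;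 the solution is regular on $\mathcal{D}$, $\phi=0$ on the axis. Flux smallness conditions: (F1) for every $\underline{u}\in[-1,0]$, $\int_{-2-\underline{u}}^{\underline{u}}\big((\partial_u\phi)^2+g(\phi)^2/r^2\big)r\,(u',\underline{u})\,du'\le\varepsilon$; (F2) for every $u\in[-2,0]$, $\int_{\max(u,-2-u)}^{0}\big((\partial_{\underline{u}}\phi)^2+g(\phi)^2/r^2\big)r\,(u,\underline{u}')\,d\underline{u}'\le\varepsilon$; both are assumed. *)

theory Defs
  imports "HOL-Analysis.Analysis"
begin

definition smooth_fun :: "(real \<Rightarrow> real) \<Rightarrow> bool" where
  "smooth_fun g \<longleftrightarrow> (\<forall>n x. ((deriv ^^ n) g) differentiable (at x))"

text \<open>Partial derivatives in null coordinates (u, ub) (ub stands for underline u).\<close>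
definition pu :: "(real \<Rightarrow> real \<Rightarrow> real) \<Rightarrow> real \<Rightarrow> real \<Rightarrow> real" where
  "pu F u ub = deriv (\<lambda>x. F x ub) u"

definition pv :: "(real \<Rightarrow> real \<Rightarrow> real) \<Rightarrow> real \<Rightarrow> real \<Rightarrow> real" where
  "pv F u ub = deriv (\<lambda>y. F u y) ub"

definition C1_on2 :: "(real \<times> real) set \<Rightarrow> (real \<Rightarrow> real \<Rightarrow> real) \<Rightarrow> bool" where
  "C1_on2 U F \<longleftrightarrow>
     continuous_on U (\<lambda>p. F (fst p) (snd p)) \<and>
     continuous_on U (\<lambda>p. pu F (fst p) (snd p)) \<and>
     continuous_on U (\<lambda>p. pv F (fst p) (snd p)) \<and>
     (\<forall>p\<in>U. (\<lambda>x. F x (snd p)) differentiable (at (fst p)) \<and>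
             (\<lambda>y. F (fst p) y) differentiable (at (snd p)))"

definition C2_on2 :: "(real \<times> real) set \<Rightarrow> (real \<Rightarrow> real \<Rightarrow> real) \<Rightarrow> bool" where
  "C2_on2 U F \<longleftrightarrow> C1_on2 U F \<and> C1_on2 U (pu F) \<and> C1_on2 U (pv F)"

definition domD :: "(real \<times> real) set" where
  "domD = {(u, ub). -1 \<le> (u + ub) / 2 \<and> (u + ub) / 2 < 0 \<and> ub \<le> 0 \<and> u \<le> ub}"

definition admissible_target :: "(real \<Rightarrow> real) \<Rightarrow> bool" where
  "admissible_target g \<longleftrightarrow>
     smooth_fun g \<and> (\<forall>s. g (- s) = - g s) \<and> deriv g 0 = 1 \<and>
     filterlim (\<lambda>s. integral {0..s} g) at_top at_top \<and>
     (\<forall>s>0. s * deriv g s + g s > 0)"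

definition regular_solution ::
  "(real \<Rightarrow> real) \<Rightarrow> real \<Rightarrow> (real \<Rightarrow> real \<Rightarrow> real) \<Rightarrow> (real \<Rightarrow> real \<Rightarrow> real)
     \<Rightarrow> (real \<Rightarrow> real \<Rightarrow> real) \<Rightarrow> bool" where
  "regular_solution g \<kappa> r \<Omega> \<phi> \<longleftrightarrow>
     (let f = (\<lambda>s. g s * deriv g s) in
     (\<exists>U. open U \<and> domD \<subseteq> U \<and> C2_on2 U r \<and> C2_on2 U \<Omega> \<and> C2_on2 U \<phi>) \<and>
     (\<forall>(u, ub)\<in>domD. \<Omega> u ub > 0) \<and>
     (\<forall>(u, ub)\<in>domD. u < ub \<longrightarrow> r u ub > 0) \<and>
     (\<forall>(u, ub)\<in>domD. u = ub \<longrightarrow>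
        r u ub = 0 \<and> pv r u ub = 1/2 \<and> pu r u ub = -1/2 \<and> \<Omega> u ub = 1 \<and> \<phi> u ub = 0) \<and>
     (\<forall>(u, ub)\<in>domD. u < ub \<longrightarrow>
        pu (\<lambda>a b. pu r a b / (\<Omega> a b)^2) u ub
          = - \<kappa> * r u ub * (pu \<phi> u ub)^2 / (\<Omega> u ub)^2 \<and>
        pv (\<lambda>a b. pv r a b / (\<Omega> a b)^2) u ub
          = - \<kappa> * r u ub * (pv \<phi> u ub)^2 / (\<Omega> u ub)^2 \<and>
        pu (pv r) u ub = \<kappa> * (\<Omega> u ub)^2 * (g (\<phi> u ub))^2 / (4 * r u ub) \<and>
        (pu \<Omega> u ub * pv \<Omega> u ub - \<Omega> u ub * pu (pv \<Omega>) u ub) / (\<Omega> u ub)^2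
          = \<kappa> / 8 * (4 * pu \<phi> u ub * pv \<phi> u ub
                       + (\<Omega> u ub)^2 * (g (\<phi> u ub))^2 / (r u ub)^2) \<and>
        pu (\<lambda>a b. r a b * pv \<phi> a b) u ub + pv (\<lambda>a b. r a b * pu \<phi> a b) u ub
          = - ((\<Omega> u ub)^2 * f (\<phi> u ub) / (2 * r u ub))))"

definition flux_F1 ::
  "(real \<Rightarrow> real) \<Rightarrow> (real \<Rightarrow> real \<Rightarrow> real) \<Rightarrow> (real \<Rightarrow> real \<Rightarrow> real) \<Rightarrow> real \<Rightarrow> bool" where
  "flux_F1 g r \<phi> \<epsilon> \<longleftrightarrow>
     (\<forall>ub\<in>{-1..0}.
        let h = (\<lambda>u'. ((pu \<phi> u' ub)^2 + (g (\<phi> u' ub))^2 / (r u' ub)^2) * r u' ub) in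
        h integrable_on {-2 - ub..ub} \<and> integral {-2 - ub..ub} h \<le> \<epsilon>)"

definition flux_F2 ::
  "(real \<Rightarrow> real) \<Rightarrow> (real \<Rightarrow> real \<Rightarrow> real) \<Rightarrow> (real \<Rightarrow> real \<Rightarrow> real) \<Rightarrow> real \<Rightarrow> bool" where
  "flux_F2 g r \<phi> \<epsilon> \<longleftrightarrow>
     (\<forall>u\<in>{-2..0}.
        let h = (\<lambda>ub'. ((pv \<phi> u ub')^2 + (g (\<phi> u ub'))^2 / (r u ub')^2) * r u ub') in
        h integrable_on {max u (-2 - u)..0} \<and> integral {max u (-2 - u)..0} h \<le> \<epsilon>)"

end

theory Submission
  imports Defs
begin

lemma adm_deriv:
  assumes "admissible_target g"
  shows "DERIV g x :> deriv g x"
proof -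
  have "((deriv ^^ 0) g) differentiable (at x)"
    using assms unfolding admissible_target_def smooth_fun_def by blast
  then show ?thesis by (simp add: DERIV_deriv_iff_real_differentiable)
qed

lemma adm_cont: "admissible_target g \<Longrightarrow> continuous_on UNIV g"
  by (intro continuous_at_imp_continuous_on ballI DERIV_isCont[OF adm_deriv])

lemma adm_g0: 
  assumes "admissible_target g" shows "g 0 = 0"
proof -
  have "g (- 0) = - g 0" using assms unfolding admissible_target_def by blast
  then show ?thesis by simp
qed

lemma adm_pos:
  assumes a: "admissible_target g" and s: "s > 0"
  shows "g s > 0"
proof -
  have "\<And>x. 0 \<le> x \<Longrightarrow> x \<le> s \<Longrightarrow> DERIV (\<lambda>t. t * g t) x :> (g x + x * deriv g x)"
    using adm_deriv[OF a] by (auto intro!: derivative_eq_intros)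
  from MVT2[OF s this] obtain z where z: "0 < z" "z < s"
    "s * g s - 0 * g 0 = (s - 0) * (g z + z * deriv g z)" by blast
  have "z * deriv g z + g z > 0" using a z(1) unfolding admissible_target_def by blast
  then have "s * (g z + z * deriv g z) > 0" using s by (simp add: add.commute)
  moreover have "s * g s = s * (g z + z * deriv g z)" using z(3) by simp
  ultimately have "s * g s > 0" by linarith
  then show ?thesis using s by (simp add: zero_less_mult_iff)
qed

lemma adm_odd: "admissible_target g \<Longrightarrow> g (- s) = - g s"
  unfolding admissible_target_def by blast

lemma adm_G:
  assumes a: "admissible_target g"
  obtains G where "\<And>x. DERIV G x :> g x" "G 0 = 0" "\<And>x. G (- x) = G x"
proof -
  have "\<exists>F. \<forall>x :: real. (-\<infinity>::ereal) < x \<longrightarrow> x < (\<infinity>::ereal) \<longrightarrow> (F has_vector_derivative g x) (at x)"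
    by (rule einterval_antiderivative) (use adm_cont[OF a] in \<open>auto simp: continuous_on_eq_continuous_at\<close>)
  then obtain F where F: "\<And>x. DERIV F x :> g x"
    by (auto simp: has_real_derivative_iff_has_vector_derivative)
  define G where "G x = F x - F 0" for x
  have dG: "DERIV G x :> g x" for x unfolding G_def using F by (auto intro!: derivative_eq_intros)
  have ev: "G (- x) = G x" for x
  proof -
    have "\<forall>y. DERIV (\<lambda>y. G (- y) - G y) y :> 0"
    proof
      fix y
      have "DERIV (\<lambda>y. G (- y) - G y) y :> (g (- y) * (- 1) - g y)"
      proof -
        have "DERIV (\<lambda>y. G (- y)) y :> g (- y) * (- 1)"
          by (rule DERIV_chain2[OF dG]) (auto intro!: derivative_eq_intros)
        then show ?thesis using dG[of y] by (auto intro!: derivative_eq_intros)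
      qed
      then show "DERIV (\<lambda>y. G (- y) - G y) y :> 0" using adm_odd[OF a, of y] by simp
    qed
    from DERIV_isconst_all[OF this, of x 0] show ?thesis by simp
  qed
  have "G 0 = 0" by (simp add: G_def)
  then show ?thesis using that[of G] dG ev by blast
qed

lemma adm_delta:
  assumes a: "admissible_target g"
  obtains d where "d > 0" "\<And>t. 0 < t \<Longrightarrow> t \<le> d \<Longrightarrow> g t > t / 2"
proof -
  have "(g has_real_derivative 1) (at 0)"
    using adm_deriv[OF a, of 0] a unfolding admissible_target_def by simp
  then have "((\<lambda>y. (g y - g 0) / (y - 0)) \<longlongrightarrow> 1) (at 0)"
    by (simp add: has_field_derivative_iff)
  then have "eventually (\<lambda>y. (g y - g 0) / (y - 0) > 1/2) (at 0)"
    by (rule order_tendstoD) simp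
  then obtain e where e: "e > 0" "\<And>y. y \<noteq> 0 \<Longrightarrow> dist y 0 < e \<Longrightarrow> (g y - g 0) / (y - 0) > 1/2"
    unfolding eventually_at by blast
  show ?thesis
  proof (rule that[of "e/2"])
    show "e / 2 > 0" using e by simp
    fix t :: real assume t: "0 < t" "t \<le> e / 2"
    have "g t / t > 1/2" using e(2)[of t] t e(1) adm_g0[OF a] by simp
    then show "g t > t / 2" using t by (simp add: field_simps)
  qed
qed

lemma adm_Gbounds:
  assumes a: "admissible_target g" and dG: "\<And>x. DERIV G x :> g x" and G0: "G 0 = 0"
    and Gev: "\<And>x. G (- x) = G x"
  obtains d where "d > 0" "\<And>s. \<bar>s\<bar> \<le> d \<Longrightarrow> G s \<ge> s^2 / 4"
    "\<And>s. \<bar>s\<bar> \<ge> d \<Longrightarrow> G s \<ge> d^2 / 4"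
proof -
  obtain d where d: "d > 0" "\<And>t. 0 < t \<Longrightarrow> t \<le> d \<Longrightarrow> g t > t / 2"
    using adm_delta[OF a] by blast
  have gnn: "g t \<ge> 0" if "t \<ge> 0" for t
    using adm_pos[OF a, of t] adm_g0[OF a] that by (cases "t = 0") auto
  have Gabs: "G s = G \<bar>s\<bar>" for s using Gev[of s] by (cases "s \<ge> 0") auto
  have low: "G t \<ge> t^2 / 4" if "0 \<le> t" "t \<le> d" for t
  proof -
    have "(\<lambda>x. G x - x^2/4) 0 \<le> (\<lambda>x. G x - x^2/4) t"
    proof (rule DERIV_nonneg_imp_nondecreasing[OF that(1)])
      fix x assume x: "0 \<le> x" "x \<le> t"
      have "DERIV (\<lambda>x. G x - x^2/4) x :> g x - 2 * x / 4"
        using dG[of x] by (auto intro!: derivative_eq_intros)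
      moreover have "g x - 2 * x / 4 \<ge> 0"
        using d(2)[of x] x that adm_g0[OF a] by (cases "x = 0") auto
      ultimately show "\<exists>y. DERIV (\<lambda>x. G x - x^2/4) x :> y \<and> y \<ge> 0" by blast
    qed
    then show ?thesis using G0 by simp
  qed
  have mono: "G t1 \<le> G t2" if "0 \<le> t1" "t1 \<le> t2" for t1 t2
  proof (rule DERIV_nonneg_imp_nondecreasing[OF that(2)])
    fix x assume x: "t1 \<le> x" "x \<le> t2"
    show "\<exists>y. DERIV G x :> y \<and> y \<ge> 0" using dG[of x] gnn[of x] x that by auto
  qed
  show ?thesis
  proof (rule that[OF d(1)])
    fix s :: real assume "\<bar>s\<bar> \<le> d"
    then show "G s \<ge> s^2 / 4" using low[of "\<bar>s\<bar>"] Gabs[of s] by simp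
  next
    fix s :: real assume "\<bar>s\<bar> \<ge> d"
    then show "G s \<ge> d^2 / 4" using low[of d] mono[of d "\<bar>s\<bar>"] Gabs[of s] d(1) by simp
  qed
qed

lemma reg_U:
  assumes "regular_solution g \<kappa> r \<Omega> \<phi>"
  shows "\<exists>U. open U \<and> domD \<subseteq> U \<and> C2_on2 U r \<and> C2_on2 U \<Omega> \<and> C2_on2 U \<phi>"
  using assms unfolding regular_solution_def Let_def by (elim conjE) assumption

lemma reg_rpos:
  assumes "regular_solution g \<kappa> r \<Omega> \<phi>" "(x, y) \<in> domD" "x < y"
  shows "r x y > 0"
proof -
  have "\<forall>(u, ub)\<in>domD. u < ub \<longrightarrow> r u ub > 0"
    using assms(1) unfolding regular_solution_def Let_def by (elim conjE) assumption
  then show ?thesis using assms(2,3) by auto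
qed

lemma reg_axis:
  assumes "regular_solution g \<kappa> r \<Omega> \<phi>" "(x, y) \<in> domD" "x = y"
  shows "r x y = 0 \<and> \<phi> x y = 0"
proof -
  have "\<forall>(u, ub)\<in>domD. u = ub \<longrightarrow>
        r u ub = 0 \<and> pv r u ub = 1/2 \<and> pu r u ub = -1/2 \<and> \<Omega> u ub = 1 \<and> \<phi> u ub = 0"
    using assms(1) unfolding regular_solution_def Let_def by (elim conjE) assumption
  then show ?thesis using assms(2,3) by auto
qed

lemma key_bound:
  assumes a: "admissible_target g" and dG: "\<And>x. DERIV G x :> g x" and G0: "G 0 = 0"
    and reg: "regular_solution g \<kappa> r \<Omega> \<phi>" and F1: "flux_F1 g r \<phi> \<epsilon>"
    and D: "(u, ub) \<in> domD" and ub: "ub < 0"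
  shows "G (\<phi> u ub) \<le> \<epsilon> / 2"
proof -
  obtain U where U: "open U" "domD \<subseteq> U" "C2_on2 U \<phi>"
    using reg_U[OF reg] by blast
  have C1: "C1_on2 U \<phi>" using U(3) unfolding C2_on2_def by blast
  have rpos: "r x y > 0" if "(x, y) \<in> domD" "x < y" for x y
    using reg_rpos[OF reg that] .
  have axis: "r x y = 0 \<and> \<phi> x y = 0" if "(x, y) \<in> domD" "x = y" for x y
    using reg_axis[OF reg that] .
  have uD: "u \<le> ub" "-2 - ub \<le> u" "-1 \<le> ub" using D by (auto simp: domD_def)
  have inD: "(x, ub) \<in> domD" if "-2 - ub \<le> x" "x \<le> ub" for x
    using that ub by (auto simp: domD_def)
  define h' where "h' x = g (\<phi> x ub) * pu \<phi> x ub" for x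
  define k where "k = (\<lambda>x. ((pu \<phi> x ub)^2 + (g (\<phi> x ub))^2 / (r x ub)^2) * r x ub)"
  have der: "DERIV (\<lambda>x. G (\<phi> x ub)) x :> h' x" if "x \<in> {u..ub}" for x
  proof -
    have "(x, ub) \<in> U" using inD[of x] that uD U(2) by auto
    then have "(\<lambda>x. \<phi> x ub) differentiable (at x)"
      using C1 unfolding C1_on2_def by fastforce
    then have "DERIV (\<lambda>x. \<phi> x ub) x :> pu \<phi> x ub"
      by (simp add: DERIV_deriv_iff_real_differentiable pu_def)
    from DERIV_chain2[OF dG this] show ?thesis by (simp add: h'_def)
  qed
  have "(h' has_integral (G (\<phi> ub ub) - G (\<phi> u ub))) {u..ub}"
  proof (rule fundamental_theorem_of_calculus[OF uD(1)])
    fix x assume x: "x \<in> {u..ub}"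
    from der[OF x] have "((\<lambda>x. G (\<phi> x ub)) has_vector_derivative h' x) (at x)"
      by (simp add: has_real_derivative_iff_has_vector_derivative)
    then show "((\<lambda>x. G (\<phi> x ub)) has_vector_derivative h' x) (at x within {u..ub})"
      by (rule has_vector_derivative_at_within)
  qed
  moreover have "G (\<phi> ub ub) = 0" using axis[OF inD[of ub]] uD G0 by simp
  ultimately have "(h' has_integral (- G (\<phi> u ub))) {u..ub}" by simp
  from has_integral_neg[OF this]
  have I1: "((\<lambda>x. - h' x) has_integral G (\<phi> u ub)) {u..ub}" by simp
  have ubI: "ub \<in> {-1..0}" using uD ub by auto
  have "let h = (\<lambda>u'. ((pu \<phi> u' ub)^2 + (g (\<phi> u' ub))^2 / (r u' ub)^2) * r u' ub) in
        h integrable_on {-2 - ub..ub} \<and> integral {-2 - ub..ub} h \<le> \<epsilon>"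
    using F1 ubI unfolding flux_F1_def by blast
  then have Fk: "k integrable_on {-2 - ub..ub}" "integral {-2 - ub..ub} k \<le> \<epsilon>"
    unfolding Let_def k_def by blast+
  have kint: "k integrable_on {u..ub}"
    by (rule integrable_on_subinterval[OF Fk(1)]) (use uD in auto)
  have knn: "k x \<ge> 0" if "x \<in> {-2 - ub..ub}" for x
  proof (cases "x = ub")
    case True then show ?thesis using axis[OF inD[of ub]] uD by (simp add: k_def)
  next
    case False then show ?thesis using rpos[OF inD[of x]] that by (auto simp: k_def)
  qed
  have pw: "- h' x \<le> k x / 2" if "x \<in> {u..ub}" for x
  proof (cases "x = ub")
    case True then show ?thesis using axis[OF inD[of ub]] uD adm_g0[OF a] by (simp add: k_def h'_def)
  next
    case False
    then have rp: "r x ub > 0" using rpos[OF inD[of x]] that uD by auto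
    define A where "A = pu \<phi> x ub"
    define B where "B = g (\<phi> x ub)"
    define R where "R = r x ub"
    have R: "R > 0" using rp by (simp add: R_def)
    have kx: "k x = A^2 * R + B^2 / R" using R by (simp add: k_def A_def B_def R_def power2_eq_square field_simps)
    have "0 \<le> (A * R + B)^2" by simp
    then have "- 2 * A * B * R \<le> A^2 * R^2 + B^2" by (simp add: power2_eq_square algebra_simps)
    then have "- 2 * A * B \<le> (A^2 * R^2 + B^2) / R" using R by (simp add: field_simps)
    also have "\<dots> = A^2 * R + B^2 / R" using R by (simp add: power2_eq_square field_simps)
    finally show ?thesis unfolding kx h'_def A_def[symmetric] B_def[symmetric] by (simp add: algebra_simps)
  qed
  have kint2: "(\<lambda>x. k x / 2) integrable_on {u..ub}"
    using integrable_on_divide[OF kint, of 2] by simp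
  have c1: "G (\<phi> u ub) \<le> integral {u..ub} (\<lambda>x. k x / 2)"
    by (rule has_integral_le[OF I1 integrable_integral[OF kint2]]) (use pw in blast)
  have c2: "integral {u..ub} (\<lambda>x. k x / 2) = integral {u..ub} k / 2"
    by simp
  have c3: "integral {u..ub} k \<le> integral {-2 - ub..ub} k"
    by (rule integral_subset_le[OF _ kint Fk(1)]) (use uD knn in auto)
  show ?thesis using c1 c2 c3 Fk(2) by linarith
qed

lemma phi_bound_neg:
  assumes a: "admissible_target g" and dG: "\<And>x. DERIV G x :> g x" and G0: "G 0 = 0"
    and d: "d > 0" "\<And>s. \<bar>s\<bar> \<le> d \<Longrightarrow> G s \<ge> s^2 / 4"
    "\<And>s. \<bar>s\<bar> \<ge> d \<Longrightarrow> G s \<ge> d^2 / 4"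
    and reg: "regular_solution g \<kappa> r \<Omega> \<phi>" and F1: "flux_F1 g r \<phi> \<epsilon>"
    and e: "0 \<le> \<epsilon>" "\<epsilon> \<le> d^2 / 4"
    and D: "(u, ub) \<in> domD" and ub: "ub < 0"
  shows "\<bar>\<phi> u ub\<bar> \<le> sqrt 2 * sqrt \<epsilon>"
proof -
  have K: "G (\<phi> u ub) \<le> \<epsilon> / 2" by (rule key_bound[OF a dG G0 reg F1 D ub])
  have "\<bar>\<phi> u ub\<bar> < d"
  proof (rule ccontr)
    assume "\<not> \<bar>\<phi> u ub\<bar> < d"
    then have "G (\<phi> u ub) \<ge> d^2/4" using d(3) by simp
    moreover have "d^2 > 0" using d(1) by simp
    ultimately show False using K e by linarith
  qed
  then have "(\<phi> u ub)^2 / 4 \<le> \<epsilon> / 2" using d(2)[of "\<phi> u ub"] K by linarith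
  then have "(\<phi> u ub)^2 \<le> 2 * \<epsilon>" by simp
  then have "sqrt ((\<phi> u ub)^2) \<le> sqrt (2 * \<epsilon>)" by (rule real_sqrt_le_mono)
  then show ?thesis by (simp add: real_sqrt_mult)
qed

theorem mainTheorem13:
  fixes g :: "real \<Rightarrow> real"
  assumes "admissible_target g"
  shows "\<exists>\<epsilon>0>0. \<exists>C>0. \<forall>\<kappa> r \<Omega> \<phi> \<epsilon>.
           \<kappa> > 0 \<longrightarrow> 0 \<le> \<epsilon> \<longrightarrow> \<epsilon> \<le> \<epsilon>0 \<longrightarrow>
           regular_solution g \<kappa> r \<Omega> \<phi> \<longrightarrow>
           flux_F1 g r \<phi> \<epsilon> \<longrightarrow> flux_F2 g r \<phi> \<epsilon> \<longrightarrow>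
           (\<forall>(u, ub)\<in>domD. \<bar>\<phi> u ub\<bar> \<le> C * sqrt \<epsilon>)"
proof -
  note a = assms
  obtain G where G: "\<And>x. DERIV G x :> g x" "G 0 = 0" "\<And>x. G (- x) = G x"
    using adm_G[OF a] by blast
  obtain d where d: "d > 0" "\<And>s. \<bar>s\<bar> \<le> d \<Longrightarrow> G s \<ge> s^2 / 4"
    "\<And>s. \<bar>s\<bar> \<ge> d \<Longrightarrow> G s \<ge> d^2 / 4"
    using adm_Gbounds[OF a G] by blast
  have main: "\<bar>\<phi> u ub\<bar> \<le> sqrt 2 * sqrt \<epsilon>"
    if reg: "regular_solution g \<kappa> r \<Omega> \<phi>" and F1: "flux_F1 g r \<phi> \<epsilon>"
      and e: "0 \<le> \<epsilon>" "\<epsilon> \<le> d^2 / 4" and D: "(u, ub) \<in> domD"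
    for \<kappa> r \<Omega> \<phi> \<epsilon> u ub
  proof (cases "ub < 0")
    case True
    show ?thesis by (rule phi_bound_neg[OF a G(1,2) d reg F1 e D True])
  next
    case False
    then have ub0: "ub = 0" and u: "u < 0" "-2 \<le> u" using D by (auto simp: domD_def)
    obtain U where U: "open U" "domD \<subseteq> U" "C2_on2 U \<phi>"
      using reg_U[OF reg] by blast
    have cU: "continuous_on U (\<lambda>p. \<phi> (fst p) (snd p))"
      using U(3) unfolding C2_on2_def C1_on2_def by blast
    have "isCont (\<lambda>p. \<phi> (fst p) (snd p)) (u, 0)"
      using cU U D ub0 by (auto simp: continuous_on_eq_continuous_at)
    moreover have "((\<lambda>s. (u + s, - s / 2)) \<longlongrightarrow> (u, 0)) (at_right 0)"
      by (auto intro!: tendsto_eq_intros)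
    ultimately have "((\<lambda>s. \<phi> (fst (u + s, - s / 2)) (snd (u + s, - s / 2))) \<longlongrightarrow> \<phi> u 0) (at_right 0)"
      using isCont_tendsto_compose[where g="\<lambda>p. \<phi> (fst p) (snd p)"] by fastforce
    then have lim: "((\<lambda>s. \<bar>\<phi> (u + s) (- s / 2)\<bar>) \<longlongrightarrow> \<bar>\<phi> u 0\<bar>) (at_right 0)"
      by (auto intro: tendsto_rabs)
    have ev: "eventually (\<lambda>s. \<bar>\<phi> (u + s) (- s / 2)\<bar> \<le> sqrt 2 * sqrt \<epsilon>) (at_right 0)"
      unfolding eventually_at_right_field
    proof (intro exI[of _ "- 2 * u / 3"] conjI allI impI)
      show "0 < - 2 * u / 3" using u by simp
      fix s :: real assume s: "0 < s" "s < - 2 * u / 3"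
      have s1: "(u + s, - s / 2) \<in> domD" using s u by (auto simp: domD_def)
      have s2: "- s / 2 < 0" using s by simp
      show "\<bar>\<phi> (u + s) (- s / 2)\<bar> \<le> sqrt 2 * sqrt \<epsilon>"
        using phi_bound_neg[OF a G(1,2) d reg F1 e s1 s2] .
    qed
    have "\<bar>\<phi> u 0\<bar> \<le> sqrt 2 * sqrt \<epsilon>"
      by (rule tendsto_upperbound[OF lim ev]) simp
    then show ?thesis using ub0 by simp
  qed
  show ?thesis
    apply (rule exI[of _ "d^2 / 4"])
    apply (intro conjI)
    using d(1) apply simp
    apply (rule exI[of _ "sqrt 2"])
    using main by auto
qed

end
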